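(* Let $\mathcal{C}$ be a binary linear $[n,k,d]$ code, let $d^{\perp}$ denote the minimum distance of the dual code $\mathcal{C}^{\perp}$, and for $\sigma=1,\ldots,d-1$ put $$\omega_{\sigma}=\max\left\{\left\lceil \frac{n+1}{\sigma}\right\rceil-1,\; d^{\perp}\right\}.$$ Then for every $\ell$ with $1\le \ell\le d$, $$\rho_{\ell}(\mathcal{C})\;\ge\;\max\left(n-k,\;\max_{\sigma\in\{1,\ldots,\ell-1\}}\frac{\binom{n}{\sigma}}{\omega_{\sigma}\binom{n-\omega_{\sigma}}{\sigma-1}}\right).$$
   Context: Let $\mathbf{H}$ be a binary matrix with $n$ columns indexed by $J=\{0,\ldots,n-1\}$. For a nonempty $I\subseteq J$, a row of $\mathbf{H}$ is said to resolve $I$ if its restriction to the columns in $I$ has Hamming weight exactly one. A nonempty set $I\subseteq J$ is a stopping set of $\mathbf{H}$ if no row of $\mathbf{H}$ resolves $I$. The stopping distance of $\mathbf{H}$ is the minimum size of a stopping set of $\mathbf{H}$. A (possibly redundant) parity-check matrix of a binary linear code $\mathcal{C}$ of length $n$ is a binary matrix with $n$ columns whose row space equals $\mathcal{C}^{\perp}$. For $\ell\le d$, the $\ell$-th stopping redundancy $\rho_{\ell}(\mathcal{C})$ is the smallest number of rows of a (possibly redundant) parity-check matrix of $\mathcal{C}$ with stopping distance at least $\ell$. *)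

theory Defs
  imports Complex_Main "HOL-Library.Extended_Nat"
begin

text \<open>Binary vectors of length n are identified with their supports, i.e. subsets
  of J = {0..<n}; vector addition over GF(2) is symmetric difference.
  A binary matrix with n columns is a list of rows, each row a subset of {0..<n}
  (repeated rows allowed; the number of rows is the length of the list).\<close>

definition binary_linear_code :: "nat \<Rightarrow> nat set set \<Rightarrow> bool" where
  "binary_linear_code n C \<longleftrightarrow>
     (\<forall>x\<in>C. x \<subseteq> {0..<n}) \<and> {} \<in> C \<and>
     (\<forall>x\<in>C. \<forall>y\<in>C. (x - y) \<union> (y - x) \<in> C)"

text \<open>Hamming weight of a vector = card of its support; minimum distance of a
  linear code = minimum weight of a nonzero codeword.\<close>
definition min_dist :: "nat set set \<Rightarrow> nat" where
  "min_dist C = Inf (card ` (C - {{}}))"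

definition dual_code :: "nat \<Rightarrow> nat set set \<Rightarrow> nat set set" where
  "dual_code n C = {y. y \<subseteq> {0..<n} \<and> (\<forall>x\<in>C. even (card (x \<inter> y)))}"

definition row_sum :: "nat set list \<Rightarrow> nat set \<Rightarrow> nat set" where
  "row_sum H I = {j. odd (card {i\<in>I. j \<in> H ! i})}"

definition row_space :: "nat set list \<Rightarrow> nat set set" where
  "row_space H = {row_sum H I | I. I \<subseteq> {0..<length H}}"

definition parity_check_matrix :: "nat \<Rightarrow> nat set set \<Rightarrow> nat set list \<Rightarrow> bool" where
  "parity_check_matrix n C H \<longleftrightarrow>
     (\<forall>r\<in>set H. r \<subseteq> {0..<n}) \<and> row_space H = dual_code n C"

definition resolves :: "nat set \<Rightarrow> nat set \<Rightarrow> bool" where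
  "resolves r I \<longleftrightarrow> card (r \<inter> I) = 1"

definition stopping_set :: "nat \<Rightarrow> nat set list \<Rightarrow> nat set \<Rightarrow> bool" where
  "stopping_set n H I \<longleftrightarrow> I \<noteq> {} \<and> I \<subseteq> {0..<n} \<and> (\<forall>r\<in>set H. \<not> resolves r I)"

text \<open>Stopping distance (infinite if there is no stopping set).\<close>
definition stopping_distance :: "nat \<Rightarrow> nat set list \<Rightarrow> enat" where
  "stopping_distance n H = Inf ((\<lambda>I. enat (card I)) ` {I. stopping_set n H I})"

definition stopping_redundancy :: "nat \<Rightarrow> nat set set \<Rightarrow> nat \<Rightarrow> nat" where
  "stopping_redundancy n C l =
     (LEAST m. \<exists>H. length H = m \<and> parity_check_matrix n C H \<and>
                    stopping_distance n H \<ge> enat l)"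

definition omega :: "nat \<Rightarrow> nat set set \<Rightarrow> nat \<Rightarrow> nat" where
  "omega n C \<sigma> = max (nat \<lceil>real (n + 1) / real \<sigma>\<rceil> - 1) (min_dist (dual_code n C))"

end

theory Submission
  imports Defs
begin


definition dualU :: "nat set \<Rightarrow> nat set set \<Rightarrow> nat set set" where
  "dualU U C = {y. y \<subseteq> U \<and> (\<forall>x\<in>C. even (card (x \<inter> y)))}"
definition lin :: "nat set \<Rightarrow> nat set set \<Rightarrow> bool" where
  "lin U C \<longleftrightarrow> (\<forall>x\<in>C. x \<subseteq> U) \<and> {} \<in> C \<and> (\<forall>x\<in>C. \<forall>y\<in>C. (x - y) \<union> (y - x) \<in> C)"

lemma card_symdiff:
  assumes "finite A" "finite B"
  shows "card ((A - B) \<union> (B - A)) + 2 * card (A \<inter> B) = card A + card B"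
proof -
  have e: "(A - B) \<union> (B - A) = (A \<union> B) - (A \<inter> B)" by blast
  have "card ((A \<union> B) - (A \<inter> B)) = card (A \<union> B) - card (A \<inter> B)"
    by (rule card_Diff_subset) (use assms in auto)
  moreover have "card (A \<inter> B) \<le> card (A \<union> B)" by (rule card_mono) (use assms in auto)
  moreover have "card A + card B = card (A \<union> B) + card (A \<inter> B)"
    using card_Un_Int[OF assms] .
  ultimately show ?thesis unfolding e by linarith
qed

lemma sign_symdiff:
  assumes "finite z"
  shows "(-1::int) ^ card (z \<inter> ((a - b) \<union> (b - a))) = (-1) ^ card (z \<inter> a) * (-1) ^ card (z \<inter> b)"
proof -
  have e: "z \<inter> ((a - b) \<union> (b - a)) = ((z \<inter> a) - (z \<inter> b)) \<union> ((z \<inter> b) - (z \<inter> a))" by blast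
  have "card ((z \<inter> a - z \<inter> b) \<union> (z \<inter> b - z \<inter> a)) + 2 * card ((z \<inter> a) \<inter> (z \<inter> b))
        = card (z \<inter> a) + card (z \<inter> b)"
    by (rule card_symdiff) (use assms in auto)
  hence "(-1::int) ^ (card (z \<inter> a) + card (z \<inter> b)) =
     (-1) ^ card ((z \<inter> a - z \<inter> b) \<union> (z \<inter> b - z \<inter> a)) * ((-1) ^ 2) ^ card ((z \<inter> a) \<inter> (z \<inter> b))"
    by (metis power_add power_mult)
  thus ?thesis unfolding e by (simp add: power_add)
qed

lemma even_symdiff:
  assumes "finite z"
  shows "even (card (z \<inter> ((a - b) \<union> (b - a)))) \<longleftrightarrow> (even (card (z \<inter> a)) \<longleftrightarrow> even (card (z \<inter> b)))"
proof -
  have e: "z \<inter> ((a - b) \<union> (b - a)) = ((z \<inter> a) - (z \<inter> b)) \<union> ((z \<inter> b) - (z \<inter> a))" by blast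
  have "card ((z \<inter> a - z \<inter> b) \<union> (z \<inter> b - z \<inter> a)) + 2 * card ((z \<inter> a) \<inter> (z \<inter> b))
        = card (z \<inter> a) + card (z \<inter> b)"
    by (rule card_symdiff) (use assms in auto)
  thus ?thesis unfolding e by presburger
qed

lemma lin_finite: "lin U C \<Longrightarrow> finite U \<Longrightarrow> finite C"
  unfolding lin_def by (meson Pow_iff finite_Pow_iff rev_finite_subset subsetI)

lemma sum_C_zero:
  assumes L: "lin U C" and U: "finite U" and y: "y \<subseteq> U" and x0: "x0 \<in> C" and od: "odd (card (x0 \<inter> y))"
  shows "(\<Sum>x\<in>C. (-1::int) ^ card (y \<inter> x)) = 0"
proof -
  let ?g = "\<lambda>x. (x - x0) \<union> (x0 - x)"
  have b: "bij_betw ?g C C"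
    by (rule bij_betw_byWitness[where f'="?g"]) (use L x0 in \<open>auto simp: lin_def\<close>)
  have fy: "finite y" using y U finite_subset by blast
  have "(\<Sum>x\<in>C. (-1::int) ^ card (y \<inter> ?g x)) = (\<Sum>x\<in>C. (-1::int) ^ card (y \<inter> x))"
    using sum.reindex_bij_betw[OF b] .
  moreover have "(-1::int) ^ card (y \<inter> ?g x) = - ((-1::int) ^ card (y \<inter> x))" for x
    using sign_symdiff[OF fy, of x x0] od by (simp add: Int_commute)
  ultimately have "- (\<Sum>x\<in>C. (-1::int) ^ card (y \<inter> x)) = (\<Sum>x\<in>C. (-1::int) ^ card (y \<inter> x))"
    by (simp add: sum_negf)
  thus ?thesis by linarith
qed

lemma sum_Pow_zero:
  assumes U: "finite U" and x: "x \<subseteq> U" and j: "j \<in> x"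
  shows "(\<Sum>y\<in>Pow U. (-1::int) ^ card (x \<inter> y)) = 0"
proof -
  let ?g = "\<lambda>y. (y - {j}) \<union> ({j} - y)"
  have b: "bij_betw ?g (Pow U) (Pow U)"
    by (rule bij_betw_byWitness[where f'="?g"]) (use x j in auto)
  have fx: "finite x" using x U finite_subset by blast
  have "(\<Sum>y\<in>Pow U. (-1::int) ^ card (x \<inter> ?g y)) = (\<Sum>y\<in>Pow U. (-1::int) ^ card (x \<inter> y))"
    using sum.reindex_bij_betw[OF b] .
  moreover have "(-1::int) ^ card (x \<inter> ?g y) = - ((-1::int) ^ card (x \<inter> y))" for y
  proof -
    have "x \<inter> {j} = {j}" using j by auto
    thus ?thesis using sign_symdiff[OF fx, of y "{j}"] by simp
  qed
  ultimately have "- (\<Sum>y\<in>Pow U. (-1::int) ^ card (x \<inter> y)) = (\<Sum>y\<in>Pow U. (-1::int) ^ card (x \<inter> y))"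
    by (simp add: sum_negf)
  thus ?thesis by linarith
qed

lemma count_dual:
  assumes L: "lin U C" and U: "finite U"
  shows "card C * card (dualU U C) = 2 ^ card U"
proof -
  define D where "D = dualU U C"
  have fC: "finite C" using lin_finite[OF L U] .
  have DP: "D \<subseteq> Pow U" unfolding D_def dualU_def by auto
  have "(\<Sum>y\<in>Pow U. \<Sum>x\<in>C. (-1::int) ^ card (y \<inter> x)) = (\<Sum>y\<in>D. \<Sum>x\<in>C. (-1::int) ^ card (y \<inter> x))"
  proof (rule sum.mono_neutral_right)
    show "\<forall>y\<in>Pow U - D. (\<Sum>x\<in>C. (-1::int) ^ card (y \<inter> x)) = 0"
    proof
      fix y assume "y \<in> Pow U - D"
      then obtain x0 where "x0 \<in> C" "odd (card (x0 \<inter> y))" "y \<subseteq> U"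
        unfolding D_def dualU_def by auto
      thus "(\<Sum>x\<in>C. (-1::int) ^ card (y \<inter> x)) = 0" using sum_C_zero[OF L U] by blast
    qed
  qed (use U DP in auto)
  also have "\<dots> = (\<Sum>y\<in>D. int (card C))"
  proof (rule sum.cong)
    fix y assume "y \<in> D"
    hence "\<forall>x\<in>C. even (card (y \<inter> x))" unfolding D_def dualU_def by (auto simp: Int_commute)
    hence "(\<Sum>x\<in>C. (-1::int) ^ card (y \<inter> x)) = (\<Sum>x\<in>C. 1)" by (intro sum.cong) auto
    thus "(\<Sum>x\<in>C. (-1::int) ^ card (y \<inter> x)) = int (card C)" by simp
  qed simp
  also have "\<dots> = int (card C * card D)" by simp
  finally have 1: "(\<Sum>y\<in>Pow U. \<Sum>x\<in>C. (-1::int) ^ card (y \<inter> x)) = int (card C * card D)" .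
  have "(\<Sum>y\<in>Pow U. \<Sum>x\<in>C. (-1::int) ^ card (y \<inter> x)) = (\<Sum>x\<in>C. \<Sum>y\<in>Pow U. (-1::int) ^ card (x \<inter> y))"
    by (subst sum.swap) (simp add: Int_commute)
  also have "\<dots> = (\<Sum>x\<in>{{}}. \<Sum>y\<in>Pow U. (-1::int) ^ card (x \<inter> y))"
  proof (rule sum.mono_neutral_right)
    show "\<forall>x\<in>C - {{}}. (\<Sum>y\<in>Pow U. (-1::int) ^ card (x \<inter> y)) = 0"
    proof
      fix x assume xC: "x \<in> C - {{}}"
      then obtain j where "j \<in> x" by auto
      moreover have "x \<subseteq> U" using xC L unfolding lin_def by auto
      ultimately show "(\<Sum>y\<in>Pow U. (-1::int) ^ card (x \<inter> y)) = 0" using sum_Pow_zero[OF U] by blast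
    qed
  qed (use fC L in \<open>auto simp: lin_def\<close>)
  also have "\<dots> = int (2 ^ card U)" using U by (simp add: card_Pow)
  finally show ?thesis using 1 unfolding D_def by linarith
qed

lemma lin_dual: assumes fU: "finite U" shows "lin U (dualU U C)"
  unfolding lin_def dualU_def
proof (intro conjI ballI)
  fix a b assume a: "a \<in> {y. y \<subseteq> U \<and> (\<forall>x\<in>C. even (card (x \<inter> y)))}"
    and b: "b \<in> {y. y \<subseteq> U \<and> (\<forall>x\<in>C. even (card (x \<inter> y)))}"
  show "a - b \<union> (b - a) \<in> {y. y \<subseteq> U \<and> (\<forall>x\<in>C. even (card (x \<inter> y)))}"
  proof (safe)
    fix x assume "x \<in> C"
    show "even (card (x \<inter> (a - b \<union> (b - a))))"
    proof -
      have f: "finite (x \<inter> U)" using fU by simp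
      have e1: "x \<inter> U \<inter> a = x \<inter> a" "x \<inter> U \<inter> b = x \<inter> b"
        "x \<inter> U \<inter> (a - b \<union> (b - a)) = x \<inter> (a - b \<union> (b - a))" using a b by auto
      show ?thesis using even_symdiff[OF f, of a b] a b \<open>x \<in> C\<close> unfolding e1 by auto
    qed
  qed (use a b in auto)
qed auto

lemma double_dual:
  assumes L: "lin U C" and U: "finite U"
  shows "dualU U (dualU U C) = C"
proof -
  have sub: "C \<subseteq> dualU U (dualU U C)"
    using L unfolding lin_def dualU_def by (auto simp: Int_commute)
  have c1: "card (dualU U (dualU U C)) * card (dualU U C) = 2 ^ card U"
    using count_dual[OF lin_dual[OF U] U] by (simp add: mult.commute)
  have c2: "card C * card (dualU U C) = 2 ^ card U" using count_dual[OF L U] .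
  have "finite (dualU U C)" using lin_finite[OF lin_dual[OF U] U] .
  moreover have "{} \<in> dualU U C" unfolding dualU_def by auto
  ultimately have "card (dualU U C) > 0" by (metis card_gt_0_iff empty_iff)
  hence "card (dualU U (dualU U C)) = card C" using c1 c2 by (metis mult_right_cancel neq0_conv)
  thus ?thesis using sub lin_finite[OF lin_dual[OF U] U] by (metis card_subset_eq)
qed



lemma blc_lin: "binary_linear_code n C = lin {0..<n} C"
  unfolding binary_linear_code_def lin_def by auto

lemma dual_dualU: "dual_code n C = dualU {0..<n} C"
  unfolding dual_code_def dualU_def by auto

lemma projection:
  assumes L: "lin {0..<n} C" and I: "I \<subseteq> {0..<n}" and j: "j \<in> I"
    and small: "\<forall>z\<in>C. z \<noteq> {} \<longrightarrow> card I < card z"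
  shows "\<exists>y\<in>dualU {0..<n} C. y \<inter> I = {j}"
proof -
  define D where "D = dualU {0..<n} C"
  define P where "P = (\<lambda>y. y \<inter> I) ` D"
  have LD: "lin {0..<n} D" unfolding D_def by (rule lin_dual) simp
  have fI: "finite I" using I finite_subset by blast
  have LP: "lin I P" unfolding lin_def P_def
  proof (intro conjI ballI)
    show "{} \<in> (\<lambda>y. y \<inter> I) ` D" using LD unfolding lin_def by force
    fix a b assume a: "a \<in> (\<lambda>y. y \<inter> I) ` D" and b: "b \<in> (\<lambda>y. y \<inter> I) ` D"
    then obtain a' b' where "a' \<in> D" "b' \<in> D" "a = a' \<inter> I" "b = b' \<inter> I" by auto
    moreover have "(a - b) \<union> (b - a) = ((a' - b') \<union> (b' - a')) \<inter> I"
      using calculation by auto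
    moreover have "(a' - b') \<union> (b' - a') \<in> D" using LD calculation unfolding lin_def by auto
    ultimately show "(a - b) \<union> (b - a) \<in> (\<lambda>y. y \<inter> I) ` D" by auto
  qed auto
  have dP: "dualU I P = {{}}"
  proof
    show "{{}} \<subseteq> dualU I P" unfolding dualU_def by auto
    show "dualU I P \<subseteq> {{}}"
    proof
      fix z assume z: "z \<in> dualU I P"
      hence zI: "z \<subseteq> I" unfolding dualU_def by auto
      have "\<forall>y\<in>D. even (card (y \<inter> z))"
      proof
        fix y assume "y \<in> D"
        hence "y \<inter> I \<in> P" unfolding P_def by auto
        hence "even (card ((y \<inter> I) \<inter> z))" using z unfolding dualU_def by auto
        moreover have "(y \<inter> I) \<inter> z = y \<inter> z" using zI by auto
        ultimately show "even (card (y \<inter> z))" by simp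
      qed
      hence "z \<in> dualU {0..<n} D" using zI I unfolding dualU_def by auto
      hence "z \<in> C" using double_dual[OF L] unfolding D_def by simp
      moreover have "card z \<le> card I" using zI fI card_mono by blast
      ultimately have "z = {}" using small by force
      thus "z \<in> {{}}" by simp
    qed
  qed
  have "card P * 1 = 2 ^ card I" using count_dual[OF LP fI] dP by simp
  hence cP: "card P = card (Pow I)" by (simp add: card_Pow fI)
  have "P \<subseteq> Pow I" unfolding P_def by auto
  hence "P = Pow I" using cP fI by (simp add: card_subset_eq)
  hence "{j} \<in> P" using j by auto
  thus ?thesis unfolding P_def D_def by auto
qed

lemma row_sum_empty: "row_sum H {} = {}"
  unfolding row_sum_def by auto

lemma row_sum_single: "row_sum H {i} = H ! i"
proof -
  have "{i'\<in>{i}. j \<in> H ! i'} = (if j \<in> H ! i then {i} else {})" for j by auto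
  thus ?thesis unfolding row_sum_def by auto
qed

lemma row_sum_insert:
  assumes "finite I" "i \<notin> I"
  shows "row_sum H (insert i I) = (row_sum H I - H ! i) \<union> (H ! i - row_sum H I)"
proof -
  have "card {i'\<in>insert i I. j \<in> H ! i'} = card {i'\<in>I. j \<in> H ! i'} + (if j \<in> H ! i then 1 else 0)" for j
  proof (cases "j \<in> H ! i")
    case True
    hence "{i'\<in>insert i I. j \<in> H ! i'} = insert i {i'\<in>I. j \<in> H ! i'}" by auto
    thus ?thesis using assms True by simp
  next
    case False
    hence "{i'\<in>insert i I. j \<in> H ! i'} = {i'\<in>I. j \<in> H ! i'}" by auto
    thus ?thesis using False by simp
  qed
  thus ?thesis unfolding row_sum_def by auto
qed

lemma row_sum_in:
  assumes L: "lin U D" and set: "set H \<subseteq> D" and I: "I \<subseteq> {0..<length H}"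
  shows "row_sum H I \<in> D"
proof -
  have "finite I" using I finite_subset by blast
  thus ?thesis using I
  proof (induction I rule: finite_induct)
    case empty thus ?case using L by (simp add: row_sum_empty lin_def)
  next
    case (insert i I)
    hence "row_sum H I \<in> D" "H ! i \<in> D" using set by auto
    thus ?case using L insert by (simp add: row_sum_insert lin_def)
  qed
qed

lemma row_space_eq:
  assumes L: "lin U D" and set: "set H = D"
  shows "row_space H = D"
proof
  show "row_space H \<subseteq> D" unfolding row_space_def using row_sum_in[OF L] set by auto
  show "D \<subseteq> row_space H"
  proof
    fix y assume "y \<in> D"
    then obtain i where "i < length H" "H ! i = y" using set by (metis in_set_conv_nth)
    thus "y \<in> row_space H" unfolding row_space_def using row_sum_single[of H i] by force
  qed
qed

lemma card_row_space: "card (row_space H) \<le> 2 ^ length H"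
proof -
  have "row_space H = row_sum H ` Pow {0..<length H}" unfolding row_space_def by auto
  hence "card (row_space H) \<le> card (Pow {0..<length H})" by (simp add: card_image_le)
  thus ?thesis by (simp add: card_Pow)
qed



definition fw :: "nat \<Rightarrow> nat \<Rightarrow> nat \<Rightarrow> nat" where
  "fw n s w = w * ((n - w) choose s)"

lemma step_core:
  assumes "w + 1 \<le> n"
  shows "\<exists>m. n - w = Suc m \<and> n - (w+1) = m \<and> (Suc m - s) * (Suc m choose s) = Suc m * (m choose s)"
proof -
  obtain m where m: "n = w + 1 + m" using assms le_Suc_ex by blast
  have "(Suc m - s) * (Suc m choose s) = Suc m * ((Suc m - 1) choose s)" by (rule binomial_absorb_comp)
  thus ?thesis using m by auto
qed

lemma step_up:
  assumes "w + 1 \<le> n" "(w+1)*(s+1) \<le> n+1"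
  shows "fw n s w \<le> fw n s (w+1)"
proof -
  obtain m where m: "n - w = Suc m" "n - (w+1) = m" and id: "(Suc m - s) * (Suc m choose s) = Suc m * (m choose s)"
    using step_core assms(1) by blast
  show ?thesis
  proof (cases "s \<le> Suc m")
    case True
    then obtain t where t: "Suc m = t + s" using le_Suc_ex by (metis add.commute)
    have nm: "n = w + 1 + m" using m assms(1) by linarith
    have "w*s \<le> t" using assms(2) nm t by (simp add: algebra_simps)
    hence ineq: "w * Suc m \<le> (w+1) * t" using t by (simp add: algebra_simps)
    have "Suc m * (w * (Suc m choose s)) = (w * Suc m) * (Suc m choose s)" by (simp only: mult_ac)
    also have "\<dots> \<le> ((w+1) * t) * (Suc m choose s)" using ineq by (rule mult_right_mono) simp
    also have "\<dots> = (w+1) * ((Suc m - s) * (Suc m choose s))" using t by (simp add: algebra_simps)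
    also have "\<dots> = (w+1) * (Suc m * (m choose s))" using id by simp
    also have "\<dots> = Suc m * ((w+1) * (m choose s))" by (simp only: mult_ac)
    finally have "Suc m * (w * (Suc m choose s)) \<le> Suc m * ((w+1) * (m choose s))" .
    hence "w * (Suc m choose s) \<le> (w+1) * (m choose s)" by (simp only: Suc_mult_le_cancel1)
    thus ?thesis unfolding fw_def m .
  next
    case False
    hence "Suc m < s" by simp
    thus ?thesis unfolding fw_def m by (simp add: binomial_eq_0)
  qed
qed

lemma step_down:
  assumes "w + 1 \<le> n" "n+1 \<le> (w+1)*(s+1)"
  shows "fw n s (w+1) \<le> fw n s w"
proof -
  obtain m where m: "n - w = Suc m" "n - (w+1) = m" and id: "(Suc m - s) * (Suc m choose s) = Suc m * (m choose s)"
    using step_core assms(1) by blast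
  show ?thesis
  proof (cases "s \<le> Suc m")
    case True
    then obtain t where t: "Suc m = t + s" using le_Suc_ex by (metis add.commute)
    have nm: "n = w + 1 + m" using m assms(1) by linarith
    have "t \<le> w*s" using assms(2) nm t by (simp add: algebra_simps)
    hence ineq: "(w+1) * t \<le> w * Suc m" using t by (simp add: algebra_simps)
    have "Suc m * ((w+1) * (m choose s)) = (w+1) * (Suc m * (m choose s))" by (simp only: mult_ac)
    also have "\<dots> = (w+1) * ((Suc m - s) * (Suc m choose s))" using id by simp
    also have "\<dots> = ((w+1) * t) * (Suc m choose s)" using t by (simp add: algebra_simps)
    also have "\<dots> \<le> (w * Suc m) * (Suc m choose s)" using ineq by (rule mult_right_mono) simp
    also have "\<dots> = Suc m * (w * (Suc m choose s))" by (simp only: mult_ac)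
    finally have "Suc m * ((w+1) * (m choose s)) \<le> Suc m * (w * (Suc m choose s))" .
    hence "(w+1) * (m choose s) \<le> w * (Suc m choose s)" by (simp only: Suc_mult_le_cancel1)
    thus ?thesis unfolding fw_def m .
  next
    case False
    hence "m < s" "Suc m \<le> s" by simp_all
    thus ?thesis unfolding fw_def m by (simp add: binomial_eq_0)
  qed
qed

lemma mono_up:
  assumes "a \<le> b" "b * (s+1) \<le> n"
  shows "fw n s a \<le> fw n s b"
  using assms
proof (induction b)
  case 0 thus ?case by simp
next
  case (Suc b)
  show ?case
  proof (cases "a = Suc b")
    case True thus ?thesis by simp
  next
    case False
    hence "a \<le> b" using Suc by simp
    moreover have "b * (s+1) \<le> n" using Suc.prems(2) by (simp add: algebra_simps)
    ultimately have "fw n s a \<le> fw n s b" using Suc.IH by simp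
    moreover have "b + 1 \<le> n" using Suc.prems(2) by (simp add: algebra_simps)
    moreover have "(b+1)*(s+1) \<le> n+1" using Suc.prems(2) by simp
    ultimately show ?thesis using step_up[of b n s] by simp
  qed
qed

lemma mono_down:
  assumes "a \<le> b" "b \<le> n" "n + 1 \<le> (a+1)*(s+1)"
  shows "fw n s b \<le> fw n s a"
  using assms
proof (induction b)
  case 0 thus ?case by simp
next
  case (Suc b)
  show ?case
  proof (cases "a = Suc b")
    case True thus ?thesis by simp
  next
    case False
    hence "a \<le> b" using Suc by simp
    hence 1: "fw n s b \<le> fw n s a" using Suc by simp
    have "(a+1)*(s+1) \<le> (b+1)*(s+1)" using \<open>a \<le> b\<close> by (intro mult_le_mono1) simp
    hence "fw n s (b+1) \<le> fw n s b" using step_down[of b n s] Suc.prems by simp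
    thus ?thesis using 1 by simp
  qed
qed

lemma fw_max_c:
  assumes "w \<le> n" "s + 1 \<ge> 1"
  shows "fw n s w \<le> fw n s (n div (s+1))"
proof -
  let ?c = "n div (s+1)"
  have dm: "?c * (s+1) + n mod (s+1) = n" by (rule div_mult_mod_eq)
  have c1: "?c * (s+1) \<le> n" using dm by linarith
  have c2: "n + 1 \<le> (?c+1)*(s+1)"
  proof -
    have "n mod (s+1) < s+1" by simp
    moreover have "(?c+1)*(s+1) = ?c*(s+1) + (s+1)" by simp
    ultimately show ?thesis using dm by linarith
  qed
  have cn: "?c \<le> n" by simp
  show ?thesis
  proof (cases "w \<le> ?c")
    case True thus ?thesis using mono_up[OF True c1] by simp
  next
    case False thus ?thesis using mono_down[of ?c w n s] assms c2 by simp
  qed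
qed

lemma ceil_eq:
  assumes "\<sigma> \<ge> 1"
  shows "nat \<lceil>real (n + 1) / real \<sigma>\<rceil> - 1 = n div \<sigma>"
proof -
  let ?c = "n div \<sigma>"
  have dm: "?c * \<sigma> + n mod \<sigma> = n" by (rule div_mult_mod_eq)
  have c1: "?c * \<sigma> \<le> n" using dm by linarith
  have c2: "n + 1 \<le> (?c+1)*\<sigma>"
  proof -
    have "n mod \<sigma> < \<sigma>" using assms by simp
    moreover have "(?c+1)*\<sigma> = ?c*\<sigma> + \<sigma>" by simp
    ultimately show ?thesis using dm by linarith
  qed
  have sp: "real \<sigma> > 0" using assms by simp
  have "real (?c * \<sigma>) \<le> real n" using c1 by (simp only: of_nat_le_iff)
  hence r1: "real ?c * real \<sigma> < real (n+1)" by simp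
  have "real (n+1) \<le> real ((?c+1)*\<sigma>)" using c2 by (simp only: of_nat_le_iff)
  hence r2: "real (n+1) \<le> (real ?c + 1) * real \<sigma>" by (simp add: algebra_simps)
  have "\<lceil>real (n + 1) / real \<sigma>\<rceil> = int (?c + 1)"
  proof (rule ceiling_unique)
    show "real_of_int (int (?c + 1)) - 1 < real (n + 1) / real \<sigma>"
      using r1 sp by (simp add: less_divide_eq)
    show "real (n + 1) / real \<sigma> \<le> real_of_int (int (?c + 1))"
      using r2 sp by (simp add: divide_le_eq algebra_simps)
  qed
  thus ?thesis by simp
qed

lemma count_resolved:
  assumes r: "r \<subseteq> {0..<n}" and s: "\<sigma> \<ge> 1"
  shows "card {I. I \<subseteq> {0..<n} \<and> card I = \<sigma> \<and> card (r \<inter> I) = 1} \<le> fw n (\<sigma> - 1) (card r)"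
proof -
  define S where "S = {T. T \<subseteq> {0..<n} - r \<and> card T = \<sigma> - 1}"
  have fr: "finite r" using r finite_subset by blast
  have "{I. I \<subseteq> {0..<n} \<and> card I = \<sigma> \<and> card (r \<inter> I) = 1} \<subseteq> (\<lambda>(j,T). insert j T) ` (r \<times> S)"
  proof
    fix I assume I: "I \<in> {I. I \<subseteq> {0..<n} \<and> card I = \<sigma> \<and> card (r \<inter> I) = 1}"
    then obtain j where j: "r \<inter> I = {j}" by (auto simp: card_1_singleton_iff)
    have fI: "finite I" using I finite_subset by blast
    have "I - r = I - {j}" using j by auto
    moreover have "j \<in> I" using j by auto
    ultimately have "card (I - r) = \<sigma> - 1" using I fI by (simp add: card_Diff_singleton)
    hence "I - r \<in> S" using I unfolding S_def by auto
    moreover have "I = insert j (I - r)" using j by auto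
    moreover have "j \<in> r" using j by auto
    ultimately have h1: "(j, I - r) \<in> r \<times> S" and h2: "I = (\<lambda>(j,T). insert j T) (j, I - r)" by auto
    show "I \<in> (\<lambda>(j,T). insert j T) ` (r \<times> S)" by (rule image_eqI[where f="\<lambda>(j,T). insert j T" and x="(j, I - r)", OF h2 h1])
  qed
  note sub = this
  have "card {I. I \<subseteq> {0..<n} \<and> card I = \<sigma> \<and> card (r \<inter> I) = 1} \<le> card ((\<lambda>(j,T). insert j T) ` (r \<times> S))"
  proof (rule card_mono[OF _ sub])
    have "finite S" unfolding S_def by (rule finite_subset[of _ "Pow {0..<n}"]) auto
    thus "finite ((\<lambda>(j,T). insert j T) ` (r \<times> S))" using fr by simp
  qed
  also have "\<dots> \<le> card (r \<times> S)" by (rule card_image_le) (use fr in \<open>simp add: S_def\<close>)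
  also have "\<dots> = card r * card S" by (simp add: card_cartesian_product)
  also have "card S = (n - card r) choose (\<sigma> - 1)"
  proof -
    have "card S = card ({0..<n} - r) choose (\<sigma> - 1)" unfolding S_def by (rule n_subsets) simp
    also have "card ({0..<n} - r) = n - card r" using r by (simp add: card_Diff_subset fr)
    finally show ?thesis .
  qed
  finally show ?thesis unfolding fw_def .
qed



lemma c2_lemma:
  fixes n \<sigma> :: nat
  assumes "\<sigma> \<ge> 1"
  shows "n + 1 \<le> (n div \<sigma> + 1) * \<sigma>"
proof -
  have dm: "n div \<sigma> * \<sigma> + n mod \<sigma> = n" by (rule div_mult_mod_eq)
  have "n mod \<sigma> < \<sigma>" using assms by simp
  moreover have "(n div \<sigma> + 1) * \<sigma> = n div \<sigma> * \<sigma> + \<sigma>" by simp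
  ultimately show ?thesis using dm by linarith
qed

lemma min_dist_le: "z \<in> C \<Longrightarrow> z \<noteq> {} \<Longrightarrow> min_dist C \<le> card z"
  unfolding min_dist_def by (rule wellorder_Inf_le1) auto

theorem theorem2:
  fixes n k d l :: nat and C :: "nat set set"
  assumes "binary_linear_code n C"
    and "card C = 2 ^ k" and "k \<ge> 1"
    and "d = min_dist C"
    and "1 \<le> l" and "l \<le> d"
  shows "real (stopping_redundancy n C l) \<ge> real (n - k)
       \<and> (\<forall>\<sigma>\<in>{1..l-1}.
            real (stopping_redundancy n C l) \<ge>
              real (n choose \<sigma>) /
              (real (omega n C \<sigma>) * real ((n - omega n C \<sigma>) choose (\<sigma> - 1))))"
proof -
  have L: "lin {0..<n} C" using assms(1) blc_lin by simp
  define D where "D = dualU {0..<n} C"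
  have Dd: "dual_code n C = D" unfolding D_def by (rule dual_dualU)
  have LD: "lin {0..<n} D" unfolding D_def by (rule lin_dual) simp
  have fD: "finite D" using lin_finite[OF LD] by simp
  have cCD: "card C * card D = 2 ^ n" using count_dual[OF L] unfolding D_def by simp
  have "C \<subseteq> Pow {0..<n}" using L unfolding lin_def by auto
  hence "card C \<le> 2 ^ n" by (metis card_Pow card_atLeastLessThan card_mono diff_zero finite_Pow_iff finite_atLeastLessThan)
  hence "k \<le> n" using assms(2) by simp
  hence "(2::nat) ^ k * card D = 2 ^ k * 2 ^ (n - k)" using cCD assms(2) by (simp flip: power_add)
  hence cD: "card D = 2 ^ (n - k)" by simp
  have dmin: "\<forall>z\<in>C. z \<noteq> {} \<longrightarrow> d \<le> card z" using min_dist_le assms(4) by blast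
  obtain xs where xs: "set xs = D" using finite_list[OF fD] by blast
  have rsx: "row_space xs = D" by (rule row_space_eq[OF LD xs])
  have pcx: "parity_check_matrix n C xs"
    unfolding parity_check_matrix_def using rsx xs Dd LD unfolding lin_def by auto
  have sdx: "stopping_distance n xs \<ge> enat l"
    unfolding stopping_distance_def
  proof (rule Inf_greatest, clarify)
    fix I assume st: "stopping_set n xs I"
    show "enat l \<le> enat (card I)"
    proof (rule ccontr)
      assume "\<not> enat l \<le> enat (card I)"
      hence lt: "card I < d" using assms(6) by simp
      from st have Ine: "I \<noteq> {}" and IU: "I \<subseteq> {0..<n}" and nr: "\<forall>r\<in>set xs. \<not> resolves r I"
        unfolding stopping_set_def by auto
      obtain j where j: "j \<in> I" using Ine by auto
      have "\<forall>z\<in>C. z \<noteq> {} \<longrightarrow> card I < card z" using dmin lt by fastforce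
      then obtain y where y: "y \<in> D" "y \<inter> I = {j}" using projection[OF L IU j] unfolding D_def by blast
      hence "resolves y I" unfolding resolves_def by simp
      thus False using nr y xs by auto
    qed
  qed
  define sr where "sr = stopping_redundancy n C l"
  have "\<exists>H. length H = sr \<and> parity_check_matrix n C H \<and> stopping_distance n H \<ge> enat l"
    unfolding sr_def stopping_redundancy_def
    by (rule LeastI_ex) (use pcx sdx in blast)
  then obtain H where lH: "length H = sr" and pcH: "parity_check_matrix n C H"
    and sdH: "stopping_distance n H \<ge> enat l" by blast
  have rsH: "row_space H = D" using pcH Dd unfolding parity_check_matrix_def by simp
  have setH: "set H \<subseteq> D"
  proof
    fix r assume "r \<in> set H"
    then obtain i where "i < length H" "H ! i = r" by (metis in_set_conv_nth)
    hence "r = row_sum H {i}" using row_sum_single by simp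
    moreover have "{i} \<subseteq> {0..<length H}" using \<open>i < length H\<close> by simp
    ultimately show "r \<in> D" using rsH unfolding row_space_def by blast
  qed
  have part1: "n - k \<le> sr"
  proof -
    have "2 ^ (n - k) \<le> (2::nat) ^ length H" using card_row_space[of H] rsH cD by simp
    thus ?thesis using lH by (simp add: power_le_imp_le_exp)
  qed
  have part2: "real (n choose \<sigma>) / (real (omega n C \<sigma>) * real ((n - omega n C \<sigma>) choose (\<sigma> - 1))) \<le> real sr"
    if \<sigma>: "\<sigma> \<in> {1..l-1}" for \<sigma>
  proof -
    have s1: "\<sigma> \<ge> 1" and sl: "\<sigma> < l" using \<sigma> assms(5) by auto
    define s where "s = \<sigma> - 1"
    have ss: "\<sigma> = s + 1" using s1 s_def by simp
    define c where "c = n div \<sigma>"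
    define dp where "dp = min_dist D"
    define \<omega> where "\<omega> = omega n C \<sigma>"
    have om: "\<omega> = max c dp" unfolding \<omega>_def omega_def c_def dp_def Dd using ceil_eq[OF s1] by simp
    let ?R = "\<lambda>r. {I. I \<subseteq> {0..<n} \<and> card I = \<sigma> \<and> card (r \<inter> I) = 1}"
    have bound: "card (?R r) \<le> fw n s \<omega>" if r: "r \<in> set H" for r
    proof -
      have rD: "r \<in> D" using r setH by auto
      hence rU: "r \<subseteq> {0..<n}" using LD unfolding lin_def by auto
      have 1: "card (?R r) \<le> fw n s (card r)" using count_resolved[OF rU s1] unfolding s_def .
      show ?thesis
      proof (cases "r = {}")
        case True thus ?thesis using 1 by (simp add: fw_def)
      next
        case False
        have dpr: "dp \<le> card r" unfolding dp_def using min_dist_le[OF rD False] .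
        have rn: "card r \<le> n" using card_mono[OF finite_atLeastLessThan rU] by simp
        show ?thesis
        proof (cases "\<omega> \<le> card r")
          case True
          have "n + 1 \<le> (c + 1) * \<sigma>" unfolding c_def by (rule c2_lemma[OF s1])
          also have "\<dots> \<le> (\<omega> + 1) * \<sigma>" using om by (intro mult_le_mono1) simp
          finally have "n + 1 \<le> (\<omega> + 1) * (s + 1)" using ss by simp
          hence "fw n s (card r) \<le> fw n s \<omega>" using mono_down[OF True rn] by simp
          thus ?thesis using 1 by simp
        next
          case False
          hence "\<omega> = c" using om dpr by auto
          hence "fw n s (card r) \<le> fw n s \<omega>" using fw_max_c[OF rn] ss c_def by simp
          thus ?thesis using 1 by simp
        qed
      qed
    qed
    have cover: "{I. I \<subseteq> {0..<n} \<and> card I = \<sigma>} \<subseteq> (\<Union>r\<in>set H. ?R r)"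
    proof
      fix I assume I: "I \<in> {I. I \<subseteq> {0..<n} \<and> card I = \<sigma>}"
      hence Ine: "I \<noteq> {}" using s1 by auto
      show "I \<in> (\<Union>r\<in>set H. ?R r)"
      proof (rule ccontr)
        assume "I \<notin> (\<Union>r\<in>set H. ?R r)"
        hence "\<forall>r\<in>set H. \<not> resolves r I" using I unfolding resolves_def by auto
        hence "stopping_set n H I" using I Ine unfolding stopping_set_def by auto
        hence sdI: "stopping_distance n H \<le> enat (card I)" unfolding stopping_distance_def
          by (intro Inf_lower) auto
        have "enat l \<le> enat \<sigma>" using order_trans[OF sdH sdI] I by simp
        thus False using sl by simp
      qed
    qed
    have "n choose \<sigma> = card {I. I \<subseteq> {0..<n} \<and> card I = \<sigma>}" using n_subsets[of "{0..<n}" \<sigma>] by simp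
    also have "\<dots> \<le> card (\<Union>r\<in>set H. ?R r)"
      by (rule card_mono[OF _ cover]) (rule finite_subset[of _ "Pow {0..<n}"], auto)
    also have "\<dots> \<le> (\<Sum>r\<in>set H. card (?R r))" by (rule card_UN_le) simp
    also have "\<dots> \<le> (\<Sum>r\<in>set H. fw n s \<omega>)" by (rule sum_mono) (rule bound)
    also have "\<dots> = card (set H) * fw n s \<omega>" by simp
    also have "\<dots> \<le> length H * fw n s \<omega>" by (intro mult_le_mono1) (rule card_length)
    finally have main: "n choose \<sigma> \<le> sr * (\<omega> * ((n - \<omega>) choose s))" using lH unfolding fw_def by simp
    hence mainr: "real (n choose \<sigma>) \<le> real sr * (real \<omega> * real ((n - \<omega>) choose s))"
      by (metis of_nat_le_iff of_nat_mult)
    show ?thesis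
    proof (cases "real \<omega> * real ((n - \<omega>) choose s) = 0")
      case True
      hence "real (n choose \<sigma>) / (real \<omega> * real ((n - \<omega>) choose s)) = 0" by (simp only: division_ring_divide_zero)
      hence "real (n choose \<sigma>) / (real \<omega> * real ((n - \<omega>) choose s)) \<le> real sr" by (metis of_nat_0_le_iff)
      thus ?thesis unfolding \<omega>_def s_def .
    next
      case False
      hence pos: "real \<omega> * real ((n - \<omega>) choose s) > 0" by simp
      have "real (n choose \<sigma>) / (real \<omega> * real ((n - \<omega>) choose s)) \<le> real sr"
        using mainr pos by (simp add: divide_le_eq)
      thus ?thesis unfolding \<omega>_def s_def .
    qed
  qed
  show ?thesis using part1 part2 unfolding sr_def by auto
qed

end
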